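(* In the uKP setting described in the context, fix integers $s,l,m,n$. For $0\le k_2,k_3\le N$ define \[ \Psi(k_2,k_3)=\begin{cases} \max_{0\le i\le N-k_3}\tau_c(N-k_3-i,\,N-k_2+1+i) & (k_3\ge k_2 \text{ and } k_3\ge N-k_2),\\ \max_{0\le i\le k_2}\tau_c(N-k_2-k_3+i,\,N+1-i) & (N-k_2\ge k_3\ge k_2),\\ \max_{0\le i\le N-k_2}\tau_c(N-k_2-i,\,N-k_3+1+i) & (k_2\ge k_3\ge N-k_2),\\ \max_{0\le i\le k_3}\tau_c(N-k_2-k_3+i,\,N+1-i) & (k_2\ge k_3 \text{ and } N-k_2\ge k_3). \end{cases} \] Then \[ \tau(l,m+1,n+1)=\max_{0\le k_2,k_3\le N}\bigl(\Psi(k_2,k_3)-k_2a_2-k_3a_3\bigr), \] and for $1\le k_2,k_3\le N$: $\Psi(k_2-1,k_3)=\max(\Psi(k_2,k_3-1),\ \tau_c(N-k_3+1,N-k_2+1))$ if $k_2>k_3$; $\Psi(k_2-1,k_3)=\Psi(k_2,k_3-1)$ if $k_2=k_3$; $\max(\Psi(k_2-1,k_3),\ \tau_c(N-k_2+1,N-k_3+1))=\Psi(k_2,k_3-1)$ if $k_2<k_3$.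
   Context: Ultradiscrete permanent (UP): for a real $N\times N$ matrix $A=(a_{ij})$, $\max A\equiv\max_{\pi}\sum_{i=1}^N a_{i\pi(i)}$ over all permutations $\pi$ of $\{1,\dots,N\}$; $\max[\bm{b}_1\ \dots\ \bm{b}_N]$ is the UP of the matrix with columns $\bm{b}_j$. uKP setting: $N\ge1$; real parameters $a_1>a_2>a_3$ and arbitrary real $p_i,c_i,c'_i$ ($1\le i\le N$); for integers $l,m,n,s$, $\eta_i(l,m,n,s)=p_is+\max(0,p_i-a_1)l+\max(0,p_i-a_2)m+\max(0,p_i-a_3)n+c_i$, $\eta'_i(l,m,n,s)=-p_is+\max(0,-p_i-a_1)l+\max(0,-p_i-a_2)m+\max(0,-p_i-a_3)n+c'_i$, $\phi_i(l,m,n,s)=\max(\eta_i,\eta'_i)$, and $\tau(l,m,n)=\max[\phi_i(l,m,n,s+j-1)]_{1\le i,j\le N}$ ($s$ an auxiliary fixed integer). With $l,m,n,s$ fixed, put $\bm{\phi}(j)=(\phi_i(l,m,n,s+j))_{1\le i\le N}$, and for distinct $\alpha,\beta\in\{0,\dots,N+1\}$ let $\tau_c(\alpha,\beta)$ be the UP of the $N$ columns $\bm{\phi}(j)$, $j\in\{0,\dots,N+1\}\setminus\{\alpha,\beta\}$, taken in increasing order of $j$ (so $\tau_c(\alpha,\beta)=\tau_c(\beta,\alpha)$). *)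

theory Defs
  imports "HOL-Combinatorics.Permutations" Complex_Main
begin

definition uP :: "nat \<Rightarrow> (nat \<Rightarrow> nat \<Rightarrow> real) \<Rightarrow> real" where
  "uP N A = Max ((\<lambda>\<pi>. \<Sum>i<N. A i (\<pi> i)) ` {\<pi>. \<pi> permutes {..<N}})"

definition eta :: "real \<Rightarrow> real \<Rightarrow> real \<Rightarrow> (nat \<Rightarrow> real) \<Rightarrow> (nat \<Rightarrow> real)
    \<Rightarrow> nat \<Rightarrow> int \<Rightarrow> int \<Rightarrow> int \<Rightarrow> int \<Rightarrow> real" where
  "eta a1 a2 a3 p c i l m n s = p i * of_int s + max 0 (p i - a1) * of_int l
     + max 0 (p i - a2) * of_int m + max 0 (p i - a3) * of_int n + c i"

definition eta' :: "real \<Rightarrow> real \<Rightarrow> real \<Rightarrow> (nat \<Rightarrow> real) \<Rightarrow> (nat \<Rightarrow> real)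
    \<Rightarrow> nat \<Rightarrow> int \<Rightarrow> int \<Rightarrow> int \<Rightarrow> int \<Rightarrow> real" where
  "eta' a1 a2 a3 p c' i l m n s = - p i * of_int s + max 0 (- p i - a1) * of_int l
     + max 0 (- p i - a2) * of_int m + max 0 (- p i - a3) * of_int n + c' i"

definition phi :: "real \<Rightarrow> real \<Rightarrow> real \<Rightarrow> (nat \<Rightarrow> real) \<Rightarrow> (nat \<Rightarrow> real) \<Rightarrow> (nat \<Rightarrow> real)
    \<Rightarrow> nat \<Rightarrow> int \<Rightarrow> int \<Rightarrow> int \<Rightarrow> int \<Rightarrow> real" where
  "phi a1 a2 a3 p c c' i l m n s = max (eta a1 a2 a3 p c i l m n s) (eta' a1 a2 a3 p c' i l m n s)"

text \<open>tau(l,m,n) = UP of [phi_i(l,m,n,s+j-1)]_{1<=i,j<=N}; 0-indexed: entry (i,j) is phi_{i+1}(l,m,n,s+j).\<close>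
definition tau :: "nat \<Rightarrow> real \<Rightarrow> real \<Rightarrow> real \<Rightarrow> (nat \<Rightarrow> real) \<Rightarrow> (nat \<Rightarrow> real) \<Rightarrow> (nat \<Rightarrow> real)
    \<Rightarrow> int \<Rightarrow> int \<Rightarrow> int \<Rightarrow> int \<Rightarrow> real" where
  "tau N a1 a2 a3 p c c' s l m n =
     uP N (\<lambda>i j. phi a1 a2 a3 p c c' (Suc i) l m n (s + int j))"

definition tau_c :: "nat \<Rightarrow> real \<Rightarrow> real \<Rightarrow> real \<Rightarrow> (nat \<Rightarrow> real) \<Rightarrow> (nat \<Rightarrow> real) \<Rightarrow> (nat \<Rightarrow> real)
    \<Rightarrow> int \<Rightarrow> int \<Rightarrow> int \<Rightarrow> int \<Rightarrow> int \<Rightarrow> int \<Rightarrow> real" where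
  "tau_c N a1 a2 a3 p c c' l m n s \<alpha> \<beta> =
     (let cols = filter (\<lambda>j. j \<noteq> \<alpha> \<and> j \<noteq> \<beta>) [0..int N + 1]
      in uP N (\<lambda>i k. phi a1 a2 a3 p c c' (Suc i) l m n (s + cols ! k)))"

text \<open>Psi(k2,k3); overlapping cases resolved by taking the first applicable case.\<close>
definition Psi :: "nat \<Rightarrow> real \<Rightarrow> real \<Rightarrow> real \<Rightarrow> (nat \<Rightarrow> real) \<Rightarrow> (nat \<Rightarrow> real) \<Rightarrow> (nat \<Rightarrow> real)
    \<Rightarrow> int \<Rightarrow> int \<Rightarrow> int \<Rightarrow> int \<Rightarrow> nat \<Rightarrow> nat \<Rightarrow> real" where
  "Psi N a1 a2 a3 p c c' l m n s k2 k3 =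
     (let tc = tau_c N a1 a2 a3 p c c' l m n s; N' = int N; K2 = int k2; K3 = int k3 in
      if k3 \<ge> k2 \<and> K3 \<ge> N' - K2 then
        Max ((\<lambda>i. tc (N' - K3 - int i) (N' - K2 + 1 + int i)) ` {0..N - k3})
      else if N' - K2 \<ge> K3 \<and> k3 \<ge> k2 then
        Max ((\<lambda>i. tc (N' - K2 - K3 + int i) (N' + 1 - int i)) ` {0..k2})
      else if k2 \<ge> k3 \<and> K3 \<ge> N' - K2 then
        Max ((\<lambda>i. tc (N' - K2 - int i) (N' - K3 + 1 + int i)) ` {0..N - k2})
      else
        Max ((\<lambda>i. tc (N' - K2 - K3 + int i) (N' + 1 - int i)) ` {0..k3}))"

end

theory Submission
  imports Defs
begin


lemma maxsum: "(a2::real) > a3 \<Longrightarrow> max 0 (x - a2) + max 0 (x - a3) = max 0 (max (x - a3) (2*x - a2 - a3))"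
  by (auto simp: max_def)

lemma phi_shift:
  assumes "a2 > a3"
  shows "phi a1 a2 a3 p c c' i l (m+1) (n+1) s =
    max (phi a1 a2 a3 p c c' i l m n s) (max (phi a1 a2 a3 p c c' i l m n (s+1) - a3) (phi a1 a2 a3 p c c' i l m n (s+2) - a2 - a3))"
proof -
  have e: "eta a1 a2 a3 p c i l (m+1) (n+1) s = max (eta a1 a2 a3 p c i l m n s) (max (eta a1 a2 a3 p c i l m n (s+1) - a3) (eta a1 a2 a3 p c i l m n (s+2) - a2 - a3))"
  proof -
    have "eta a1 a2 a3 p c i l (m+1) (n+1) s = eta a1 a2 a3 p c i l m n s + (max 0 (p i - a2) + max 0 (p i - a3))"
      unfolding eta_def by (simp add: algebra_simps)
    also have "\<dots> = eta a1 a2 a3 p c i l m n s + max 0 (max (p i - a3) (2*p i - a2 - a3))"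
      using maxsum[OF assms] by simp
    also have "\<dots> = max (eta a1 a2 a3 p c i l m n s) (max (eta a1 a2 a3 p c i l m n (s+1) - a3) (eta a1 a2 a3 p c i l m n (s+2) - a2 - a3))"
      unfolding eta_def by (simp add: algebra_simps max_add_distrib_left max_add_distrib_right)
    finally show ?thesis .
  qed
  have e': "eta' a1 a2 a3 p c' i l (m+1) (n+1) s = max (eta' a1 a2 a3 p c' i l m n s) (max (eta' a1 a2 a3 p c' i l m n (s+1) - a3) (eta' a1 a2 a3 p c' i l m n (s+2) - a2 - a3))"
  proof -
    have "eta' a1 a2 a3 p c' i l (m+1) (n+1) s = eta' a1 a2 a3 p c' i l m n s + (max 0 (- p i - a2) + max 0 (- p i - a3))"
      unfolding eta'_def by (simp add: algebra_simps)
    also have "\<dots> = eta' a1 a2 a3 p c' i l m n s + max 0 (max (- p i - a3) (2*(- p i) - a2 - a3))"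
      using maxsum[OF assms] by simp
    also have "\<dots> = max (eta' a1 a2 a3 p c' i l m n s) (max (eta' a1 a2 a3 p c' i l m n (s+1) - a3) (eta' a1 a2 a3 p c' i l m n (s+2) - a2 - a3))"
      unfolding eta'_def by (simp add: algebra_simps max_add_distrib_left max_add_distrib_right)
    finally show ?thesis .
  qed
  show ?thesis unfolding phi_def e e' by (simp add: max_def)
qed

lemma phi_convex:
  "2 * phi a1 a2 a3 p c c' i l m n x \<le> phi a1 a2 a3 p c c' i l m n (x - 1) + phi a1 a2 a3 p c c' i l m n (x + 1)"
proof -
  have 1: "2 * eta a1 a2 a3 p c i l m n x = eta a1 a2 a3 p c i l m n (x - 1) + eta a1 a2 a3 p c i l m n (x + 1)"
    unfolding eta_def by (simp add: algebra_simps)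
  have 2: "2 * eta' a1 a2 a3 p c' i l m n x = eta' a1 a2 a3 p c' i l m n (x - 1) + eta' a1 a2 a3 p c' i l m n (x + 1)"
    unfolding eta'_def by (simp add: algebra_simps)
  show ?thesis unfolding phi_def using 1 2 by (auto simp: max_def)
qed




lemma uP_ge: "\<pi> permutes {..<N} \<Longrightarrow> (\<Sum>i<N. A i (\<pi> i)) \<le> uP N A"
  unfolding uP_def by (rule Max_ge) (auto simp: finite_permutations)

lemma uP_obtain: "\<exists>\<pi>. \<pi> permutes {..<N} \<and> uP N A = (\<Sum>i<N. A i (\<pi> i))"
proof -
  have "uP N A \<in> (\<lambda>\<pi>. \<Sum>i<N. A i (\<pi> i)) ` {\<pi>. \<pi> permutes {..<N}}"
    unfolding uP_def by (rule Max_in) (auto simp: finite_permutations permutes_id intro!: exI[of _ id])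
  then show ?thesis by auto
qed

locale ukp =
  fixes N :: nat and a1 a2 a3 :: real and p c c' :: "nat \<Rightarrow> real" and l m n s :: int
begin

definition P :: "nat \<Rightarrow> int \<Rightarrow> real" where
  "P i x = phi a1 a2 a3 p c c' (Suc i) l m n (s + x)"
definition w :: "nat \<Rightarrow> real" where
  "w d = (if d = 0 then 0 else if d = 1 then a3 else a2 + a3)"
definition dd :: "nat \<Rightarrow> nat \<Rightarrow> nat \<Rightarrow> nat" where
  "dd a b j = (if j < a then 0 else if j + 1 < b then 1 else 2)"
definition Wt :: "nat \<Rightarrow> nat \<Rightarrow> real" where
  "Wt a b = real (b - 1 - a) * a3 + real (N + 1 - b) * (a2 + a3)"
definition B :: "nat \<Rightarrow> nat \<Rightarrow> real" where
  "B i j = phi a1 a2 a3 p c c' (Suc i) l (m+1) (n+1) (s + int j)"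
abbreviation tc where "tc \<equiv> tau_c N a1 a2 a3 p c c' l m n s"
definition cols where "cols \<alpha> \<beta> = filter (\<lambda>j. j \<noteq> \<alpha> \<and> j \<noteq> \<beta>) [0..int N + 1]"

lemma tc_eq: "tc \<alpha> \<beta> = uP N (\<lambda>i k. P i (cols \<alpha> \<beta> ! k))"
  unfolding tau_c_def P_def cols_def Let_def ..

lemma tc_sym: "tc \<alpha> \<beta> = tc \<beta> \<alpha>"
  unfolding tau_c_def by (simp add: conj_commute)

lemma tau_eq: "tau N a1 a2 a3 p c c' s l (m + 1) (n + 1) = uP N B"
  unfolding tau_def B_def ..

lemma B_eq: assumes "a2 > a3"
  shows "B i j = max (P i (int j)) (max (P i (int j + 1) - a3) (P i (int j + 2) - a2 - a3))"
  unfolding B_def P_def using phi_shift[OF assms, of a1 p c c' "Suc i" l m n "s + int j"]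
  by (simp add: add.assoc)

lemma B_ge: assumes "a2 > a3" "d \<le> 2" shows "P i (int j + int d) - w d \<le> B i j"
proof -
  have "d = 0 \<or> d = 1 \<or> d = 2" using assms(2) by auto
  then show ?thesis using B_eq[OF assms(1), of i j] by (auto simp: w_def)
qed

lemma B_obtain: assumes "a2 > a3" shows "\<exists>d\<le>2. B i j = P i (int j + int d) - w d"
proof -
  have "B i j = P i (int j + int 0) - w 0 \<or> B i j = P i (int j + int 1) - w 1 \<or> B i j = P i (int j + int 2) - w 2"
    using B_eq[OF assms, of i j] by (auto simp: w_def max_def)
  then show ?thesis by (metis le_refl nat_le_linear one_le_numeral zero_le)
qed

lemma cols_nth: assumes "a < b" "b \<le> N + 1" "j < N"
  shows "cols (int a) (int b) ! j = int (j + dd a b j)"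
proof -
  have "[0..int N + 1] = [0..int a - 1] @ int a # [int a + 1..int N + 1]"
    using assms by (intro upto_split3) auto
  also have "[int a + 1..int N + 1] = [int a + 1..int b - 1] @ int b # [int b + 1..int N + 1]"
    using assms by (intro upto_split3) auto
  finally have e: "[0..int N + 1] = [0..int a - 1] @ int a # [int a + 1..int b - 1] @ int b # [int b + 1..int N + 1]" .
  have f1: "filter (\<lambda>j. j \<noteq> int a \<and> j \<noteq> int b) [0..int a - 1] = [0..int a - 1]"
    using assms by (auto intro!: filter_True)
  have f2: "filter (\<lambda>j. j \<noteq> int a \<and> j \<noteq> int b) [int a + 1..int b - 1] = [int a + 1..int b - 1]"
    using assms by (auto intro!: filter_True)
  have f3: "filter (\<lambda>j. j \<noteq> int a \<and> j \<noteq> int b) [int b + 1..int N + 1] = [int b + 1..int N + 1]"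
    using assms by (auto intro!: filter_True)
  have c: "cols (int a) (int b) = [0..int a - 1] @ [int a + 1..int b - 1] @ [int b + 1..int N + 1]"
    unfolding cols_def e using f1 f2 f3 by simp
  show ?thesis
  proof (cases "j < a")
    case True then show ?thesis unfolding c by (simp add: nth_append dd_def)
  next
    case F: False
    show ?thesis
    proof (cases "j + 1 < b")
      case True
      then have "[int a + 1..int b - 1] ! (j - a) = int a + 1 + int (j - a)"
        using F by (intro nth_upto) auto
      moreover have "nat (int b - int a - 1) = b - 1 - a" "j - a < b - 1 - a" using F True by auto
      ultimately show ?thesis unfolding c using F True by (simp add: nth_append dd_def)
    next
      case False
      then have "[int b + 1..int N + 1] ! (j - a - (b - 1 - a)) = int b + 1 + int (j - a - (b - 1 - a))"
        using F assms by (intro nth_upto) auto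
      moreover have "nat (int b - int a - 1) = b - 1 - a" "nat (int a - 1 + 1) = a" "\<not> j - a < b - 1 - a" using F False by auto
      ultimately show ?thesis unfolding c using F False assms by (simp add: nth_append dd_def)
    qed
  qed
qed

lemma wsum: assumes "a < b" "b \<le> N + 1" shows "(\<Sum>j<N. w (dd a b j)) = Wt a b"
proof -
  have s1: "(\<Sum>j<N. w (dd a b j)) = (\<Sum>j=0..<a. w (dd a b j)) + (\<Sum>j=a..<b-1. w (dd a b j)) + (\<Sum>j=b-1..<N. w (dd a b j))"
    using assms by (simp add: sum.atLeastLessThan_concat lessThan_atLeast0)
  have "(\<Sum>j=0..<a. w (dd a b j)) = 0" by (simp add: dd_def w_def)
  moreover have "(\<Sum>j=a..<b-1. w (dd a b j)) = (\<Sum>j=a..<b-1. a3)"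
    by (rule sum.cong) (auto simp: dd_def w_def)
  moreover have "(\<Sum>j=b-1..<N. w (dd a b j)) = (\<Sum>j=b-1..<N. a2 + a3)"
    using assms by (intro sum.cong) (auto simp: dd_def w_def)
  ultimately show ?thesis unfolding s1 Wt_def using assms
    by (simp add: algebra_simps of_nat_diff)
qed

lemma lower: assumes "a2 > a3" "a < b" "b \<le> N + 1"
  shows "tc (int a) (int b) - Wt a b \<le> uP N B"
proof -
  obtain \<pi> where \<pi>: "\<pi> permutes {..<N}" "tc (int a) (int b) = (\<Sum>i<N. P i (cols (int a) (int b) ! \<pi> i))"
    using uP_obtain unfolding tc_eq by blast
  have pi_lt: "i < N \<Longrightarrow> \<pi> i < N" for i using \<pi>(1) permutes_in_image by fastforce
  have "tc (int a) (int b) - Wt a b = (\<Sum>i<N. P i (int (\<pi> i) + int (dd a b (\<pi> i)))) - (\<Sum>i<N. w (dd a b (\<pi> i)))"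
  proof -
    have "(\<Sum>i<N. w (dd a b (\<pi> i))) = (\<Sum>j<N. w (dd a b j))"
      by (rule sum.reindex_bij_betw[OF permutes_imp_bij[OF \<pi>(1)]])
    then show ?thesis using \<pi>(2) wsum[OF assms(2,3)] cols_nth[OF assms(2,3)] pi_lt by simp
  qed
  also have "\<dots> = (\<Sum>i<N. P i (int (\<pi> i) + int (dd a b (\<pi> i))) - w (dd a b (\<pi> i)))"
    by (simp add: sum_subtractf)
  also have "\<dots> \<le> (\<Sum>i<N. B i (\<pi> i))"
    by (intro sum_mono B_ge[OF assms(1)]) (auto simp: dd_def)
  also have "\<dots> \<le> uP N B" by (rule uP_ge[OF \<pi>(1)])
  finally show ?thesis .
qed

end



lemma sum_two: assumes "Suc j < N"
  shows "(\<Sum>k<N. f k) = f j + f (Suc j) + (\<Sum>k\<in>{..<N} - {j, Suc j}. f k)"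
proof -
  have "(\<Sum>k<N. f k) = f j + (\<Sum>k\<in>{..<N} - {j}. f k)"
    using assms by (intro sum.remove) auto
  also have "(\<Sum>k\<in>{..<N} - {j}. f k) = f (Suc j) + (\<Sum>k\<in>{..<N} - {j} - {Suc j}. f k)"
    using assms by (intro sum.remove) auto
  also have "{..<N} - {j} - {Suc j} = {..<N} - {j, Suc j}" by auto
  finally show ?thesis by (simp add: add.assoc)
qed

context ukp
begin

definition Vc :: "(nat \<Rightarrow> nat) \<Rightarrow> (nat \<Rightarrow> nat) \<Rightarrow> real" where
  "Vc \<rho> e = (\<Sum>j<N. P (\<rho> j) (int j + int (e j)) - w (e j))"
definition Phi :: "(nat \<Rightarrow> nat) \<Rightarrow> nat" where
  "Phi e = (\<Sum>j<N. j * e j)"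

lemma P_convex: "P a x + P b x \<le> max (P a (x - 1) + P b (x + 1)) (P b (x - 1) + P a (x + 1))"
proof -
  have "2 * P i x \<le> P i (x - 1) + P i (x + 1)" for i
    unfolding P_def using phi_convex[of a1 a2 a3 p c c' "Suc i" l m n "s + x"]
    by (simp add: algebra_simps)
  from this[of a] this[of b] show ?thesis by (simp add: max_def)
qed

lemma Vc_two:
  assumes "Suc j < N" "\<And>k. k < N \<Longrightarrow> k \<noteq> j \<Longrightarrow> k \<noteq> Suc j \<Longrightarrow> \<rho>' k = \<rho> k \<and> e' k = e k"
  shows "Vc \<rho>' e' - Vc \<rho> e =
    (P (\<rho>' j) (int j + int (e' j)) - w (e' j)) + (P (\<rho>' (Suc j)) (int (Suc j) + int (e' (Suc j))) - w (e' (Suc j)))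
    - ((P (\<rho> j) (int j + int (e j)) - w (e j)) + (P (\<rho> (Suc j)) (int (Suc j) + int (e (Suc j))) - w (e (Suc j))))"
proof -
  have r: "(\<Sum>k\<in>{..<N} - {j, Suc j}. P (\<rho>' k) (int k + int (e' k)) - w (e' k)) =
           (\<Sum>k\<in>{..<N} - {j, Suc j}. P (\<rho> k) (int k + int (e k)) - w (e k))"
    using assms(2) by (intro sum.cong) auto
  show ?thesis unfolding Vc_def sum_two[OF assms(1), of "\<lambda>k. P (\<rho>' k) (int k + int (e' k)) - w (e' k)"]
    sum_two[OF assms(1), of "\<lambda>k. P (\<rho> k) (int k + int (e k)) - w (e k)"] r by simp
qed

lemma descent:
  assumes a23: "a2 > a3" and \<rho>: "\<rho> permutes {..<N}" and j: "Suc j < N"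
    and e2: "e j \<le> 2" and gt: "e (Suc j) < e j"
  shows "\<exists>\<rho>'. \<rho>' permutes {..<N} \<and> Vc \<rho> e \<le> Vc \<rho>' (e(j := e j - 1, Suc j := e (Suc j) + 1))"
proof -
  define e' where "e' = e(j := e j - 1, Suc j := e (Suc j) + 1)"
  define \<rho>s where "\<rho>s = \<rho> \<circ> Transposition.transpose j (Suc j)"
  have \<rho>s: "\<rho>s permutes {..<N}" unfolding \<rho>s_def
    using j by (intro permutes_compose[OF _ \<rho>] permutes_swap_id) auto
  have oth: "\<And>k. k < N \<Longrightarrow> k \<noteq> j \<Longrightarrow> k \<noteq> Suc j \<Longrightarrow> \<rho> k = \<rho> k \<and> e' k = e k"
    "\<And>k. k < N \<Longrightarrow> k \<noteq> j \<Longrightarrow> k \<noteq> Suc j \<Longrightarrow> \<rho>s k = \<rho> k \<and> e' k = e k"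
    unfolding e'_def \<rho>s_def by auto
  have \<rho>sj: "\<rho>s j = \<rho> (Suc j)" "\<rho>s (Suc j) = \<rho> j" unfolding \<rho>s_def by auto
  have e'j: "e' j = e j - 1" "e' (Suc j) = e (Suc j) + 1" unfolding e'_def by auto
  have cases: "e j = e (Suc j) + 1 \<or> (e j = 2 \<and> e (Suc j) = 0)" using e2 gt by auto
  show ?thesis
  proof (cases "e j = e (Suc j) + 1")
    case True
    define x where "x = int j + int (e j)"
    have xs: "int (Suc j) + int (e (Suc j)) = x" "int j + int (e' j) = x - 1"
      "int (Suc j) + int (e' (Suc j)) = x + 1"
      unfolding x_def e'j using True by auto
    have ww: "w (e' j) + w (e' (Suc j)) = w (e j) + w (e (Suc j))"
      unfolding e'j using True by simp
    note cv = P_convex[of "\<rho> j" x "\<rho> (Suc j)"]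
    show ?thesis
    proof (cases "P (\<rho> j) x + P (\<rho> (Suc j)) x \<le> P (\<rho> j) (x - 1) + P (\<rho> (Suc j)) (x + 1)")
      case c1: True
      have eq: "Vc \<rho> e' - Vc \<rho> e = (P (\<rho> j) (int j + int (e' j)) - w (e' j)) + (P (\<rho> (Suc j)) (int (Suc j) + int (e' (Suc j))) - w (e' (Suc j)))
    - ((P (\<rho> j) (int j + int (e j)) - w (e j)) + (P (\<rho> (Suc j)) (int (Suc j) + int (e (Suc j))) - w (e (Suc j))))"
        by (rule Vc_two[OF j]) (use oth(1) in auto)
      have "Vc \<rho> e' - Vc \<rho> e \<ge> 0"
        unfolding eq xs x_def[symmetric] using c1 ww by simp
      then show ?thesis using \<rho> unfolding e'_def by auto
    next
      case c2: False
      then have c2: "P (\<rho> j) x + P (\<rho> (Suc j)) x \<le> P (\<rho> (Suc j)) (x - 1) + P (\<rho> j) (x + 1)"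
        using cv by (simp add: max_def split: if_splits)
      have eq: "Vc \<rho>s e' - Vc \<rho> e = (P (\<rho>s j) (int j + int (e' j)) - w (e' j)) + (P (\<rho>s (Suc j)) (int (Suc j) + int (e' (Suc j))) - w (e' (Suc j)))
    - ((P (\<rho> j) (int j + int (e j)) - w (e j)) + (P (\<rho> (Suc j)) (int (Suc j) + int (e (Suc j))) - w (e (Suc j))))"
        by (rule Vc_two[OF j]) (use oth(2) in auto)
      have "Vc \<rho>s e' - Vc \<rho> e \<ge> 0"
        unfolding eq xs x_def[symmetric] \<rho>sj using c2 ww by simp
      then show ?thesis using \<rho>s unfolding e'_def by auto
    qed
  next
    case False
    then have ev: "e j = 2" "e (Suc j) = 0" using cases by auto
    have eq: "Vc \<rho>s e' - Vc \<rho> e = (P (\<rho>s j) (int j + int (e' j)) - w (e' j)) + (P (\<rho>s (Suc j)) (int (Suc j) + int (e' (Suc j))) - w (e' (Suc j)))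
    - ((P (\<rho> j) (int j + int (e j)) - w (e j)) + (P (\<rho> (Suc j)) (int (Suc j) + int (e (Suc j))) - w (e (Suc j))))"
        by (rule Vc_two[OF j]) (use oth(2) in auto)
    have "Vc \<rho>s e' - Vc \<rho> e \<ge> 0"
      unfolding eq \<rho>sj e'j ev using a23 by (simp add: w_def algebra_simps)
    then show ?thesis using \<rho>s unfolding e'_def by auto
  qed
qed

end



context ukp
begin

lemma mono_final:
  assumes \<rho>: "\<rho> permutes {..<N}" and e2: "\<forall>j<N. e j \<le> 2"
    and mono: "\<forall>j. Suc j < N \<longrightarrow> e j \<le> e (Suc j)"
  shows "\<exists>a b. a < b \<and> b \<le> N + 1 \<and> Vc \<rho> e \<le> tc (int a) (int b) - Wt a b"
proof -
  have mono': "i \<le> j \<Longrightarrow> j < N \<Longrightarrow> e i \<le> e j" for i j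
  proof (induction j)
    case 0 then show ?case by simp
  next
    case (Suc j)
    show ?case
    proof (cases "i = Suc j")
      case False
      then have "e i \<le> e j" using Suc by simp
      moreover have "e j \<le> e (Suc j)" using mono Suc.prems by simp
      ultimately show ?thesis by simp
    qed simp
  qed
  define a where "a = (LEAST j. N \<le> j \<or> 1 \<le> e j)"
  define L where "L = (LEAST j. N \<le> j \<or> 2 \<le> e j)"
  define b where "b = Suc L"
  have ea: "N \<le> a \<or> 1 \<le> e a" unfolding a_def by (rule LeastI[of _ N]) simp
  have eL: "N \<le> L \<or> 2 \<le> e L" unfolding L_def by (rule LeastI[of _ N]) simp
  have eL1: "N \<le> L \<or> 1 \<le> e L" using eL by auto
  have aL: "a \<le> L" unfolding a_def by (rule Least_le) (rule eL1)
  have LN: "L \<le> N" unfolding L_def by (rule Least_le) simp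
  have ab: "a < b" "b \<le> N + 1" using aL LN unfolding b_def by auto
  have edd: "e j = dd a b j" if jN: "j < N" for j
  proof -
    consider "j < a" | "a \<le> j" "j < L" | "L \<le> j" by linarith
    then show ?thesis
    proof cases
      case 1
      then have "\<not> (N \<le> j \<or> 1 \<le> e j)" unfolding a_def by (rule not_less_Least)
      then show ?thesis using 1 by (simp add: dd_def)
    next
      case 2
      have "\<not> (N \<le> j \<or> 2 \<le> e j)" using 2(2) unfolding L_def by (rule not_less_Least)
      moreover have "1 \<le> e j" using ea 2 jN mono'[of a j] by auto
      ultimately show ?thesis using 2 by (simp add: dd_def b_def)
    next
      case 3
      then have "2 \<le> e L" using eL jN by auto
      then have "2 \<le> e j" using mono'[of L j] 3 jN by simp
      then have "e j = 2" using e2 jN by (simp add: le_antisym)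
      moreover have "\<not> j < a" "\<not> j + 1 < b" using 3 aL unfolding b_def by auto
      ultimately show ?thesis unfolding dd_def by simp
    qed
  qed
  have "Vc \<rho> e = (\<Sum>j<N. P (\<rho> j) (cols (int a) (int b) ! j)) - (\<Sum>j<N. w (dd a b j))"
    unfolding Vc_def sum_subtractf[symmetric] using edd cols_nth[OF ab] by (intro sum.cong) auto
  also have "(\<Sum>j<N. P (\<rho> j) (cols (int a) (int b) ! j)) = (\<Sum>i<N. P i (cols (int a) (int b) ! inv \<rho> i))"
    by (rule sum.permutes_inv[OF \<rho>])
  also have "\<dots> \<le> tc (int a) (int b)" unfolding tc_eq by (rule uP_ge[OF permutes_inv[OF \<rho>]])
  finally show ?thesis using ab wsum[OF ab] by auto
qed

lemma Phi_le: "\<forall>j<N. e j \<le> 2 \<Longrightarrow> Phi e \<le> 2 * N * N"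
proof -
  assume "\<forall>j<N. e j \<le> 2"
  then have "Phi e \<le> (\<Sum>j<N. N * 2)" unfolding Phi_def
    by (intro sum_mono) (auto intro: mult_le_mono)
  then show ?thesis by simp
qed

lemma Phi_step: assumes "Suc j < N" "1 \<le> e j"
  shows "Phi (e(j := e j - 1, Suc j := e (Suc j) + 1)) = Phi e + 1"
proof -
  define e' where "e' = e(j := e j - 1, Suc j := e (Suc j) + 1)"
  have r: "(\<Sum>k\<in>{..<N} - {j, Suc j}. k * e' k) = (\<Sum>k\<in>{..<N} - {j, Suc j}. k * e k)"
    unfolding e'_def by (intro sum.cong) auto
  have "Phi e' = j * (e j - 1) + Suc j * (e (Suc j) + 1) + (\<Sum>k\<in>{..<N} - {j, Suc j}. k * e k)"
    unfolding Phi_def sum_two[OF assms(1), of "\<lambda>k. k * e' k"] r by (simp add: e'_def)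
  moreover have "Phi e = j * e j + Suc j * e (Suc j) + (\<Sum>k\<in>{..<N} - {j, Suc j}. k * e k)"
    unfolding Phi_def sum_two[OF assms(1)] ..
  moreover have "j * (e j - 1) + j = j * e j" using assms(2)
    by (metis add.commute le_add_diff_inverse mult_Suc_right plus_1_eq_Suc)
  ultimately show ?thesis unfolding e'_def by (simp add: algebra_simps)
qed

lemma upper_Vc:
  assumes a23: "a2 > a3"
  shows "\<rho> permutes {..<N} \<Longrightarrow> \<forall>j<N. e j \<le> 2 \<Longrightarrow>
     \<exists>a b. a < b \<and> b \<le> N + 1 \<and> Vc \<rho> e \<le> tc (int a) (int b) - Wt a b"
proof (induction "2 * N * N - Phi e" arbitrary: \<rho> e rule: less_induct)
  case less
  show ?case
  proof (cases "\<forall>j. Suc j < N \<longrightarrow> e j \<le> e (Suc j)")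
    case True then show ?thesis using mono_final less.prems by blast
  next
    case False
    then obtain j where j: "Suc j < N" "e (Suc j) < e j" by (auto simp: not_le)
    define e' where "e' = e(j := e j - 1, Suc j := e (Suc j) + 1)"
    obtain \<rho>' where \<rho>': "\<rho>' permutes {..<N}" "Vc \<rho> e \<le> Vc \<rho>' e'"
      using descent[OF a23 less.prems(1) j(1) _ j(2)] less.prems(2) j(1) unfolding e'_def by auto
    have "e j \<le> 2" using less.prems(2) j(1) by simp
    moreover have "e (Suc j) \<le> 1" using calculation j(2) by linarith
    ultimately have e'2: "\<forall>j<N. e' j \<le> 2" using less.prems(2) unfolding e'_def by auto
    have "Phi e' = Phi e + 1" unfolding e'_def using j by (intro Phi_step) auto
    moreover have "Phi e' \<le> 2 * N * N" by (rule Phi_le[OF e'2])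
    ultimately have "2 * N * N - Phi e' < 2 * N * N - Phi e" by linarith
    from less.hyps[OF this \<rho>'(1) e'2] \<rho>'(2) show ?thesis by force
  qed
qed

lemma upper:
  assumes a23: "a2 > a3"
  shows "\<exists>a b. a < b \<and> b \<le> N + 1 \<and> uP N B \<le> tc (int a) (int b) - Wt a b"
proof -
  obtain \<pi> where \<pi>: "\<pi> permutes {..<N}" "uP N B = (\<Sum>i<N. B i (\<pi> i))" using uP_obtain by blast
  have "\<forall>i. \<exists>d. d \<le> 2 \<and> B i (\<pi> i) = P i (int (\<pi> i) + int d) - w d"
    using B_obtain[OF a23] by blast
  then obtain d where d: "\<And>i. d i \<le> 2" "\<And>i. B i (\<pi> i) = P i (int (\<pi> i) + int (d i)) - w (d i)"
    by metis
  define \<rho> where "\<rho> = inv \<pi>"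
  have \<rho>: "\<rho> permutes {..<N}" unfolding \<rho>_def by (rule permutes_inv[OF \<pi>(1)])
  have "uP N B = (\<Sum>i<N. P i (int (\<pi> i) + int (d i)) - w (d i))" using \<pi>(2) d(2) by simp
  also have "\<dots> = Vc \<rho> (d \<circ> \<rho>)"
    unfolding Vc_def
    using sum.permutes_inv[OF \<rho>, of "\<lambda>i j. P i (int j + int (d i)) - w (d i)"]
    unfolding \<rho>_def permutes_inv_inv[OF \<pi>(1)] by simp
  finally show ?thesis using upper_Vc[OF a23 \<rho>] d(1) by auto
qed

end



context ukp
begin

definition S :: "nat \<Rightarrow> nat \<Rightarrow> (int \<times> int) set" where
  "S k2 k3 = {(\<alpha>, \<beta>). 0 \<le> \<alpha> \<and> \<alpha> < \<beta> \<and> \<beta> \<le> int N + 1 \<and> \<alpha> + \<beta> = 2 * int N + 1 - int k2 - int k3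
      \<and> int N + 1 - int (min k2 k3) \<le> \<beta>}"

lemma S_finite: "finite (S k2 k3)"
  by (rule finite_subset[of _ "{0..int N + 1} \<times> {0..int N + 1}"]) (auto simp: S_def)

lemma S_img1:
  assumes "k2 \<le> N" "k3 \<le> N" "d = min k2 k3" "K = N - max k2 k3" "int (max k2 k3) \<ge> int N - int d"
  shows "S k2 k3 = (\<lambda>i. (int N - int (max k2 k3) - int i, int N - int d + 1 + int i)) ` {0..K}"
proof (intro set_eqI iffI)
  fix x assume "x \<in> S k2 k3"
  then obtain \<alpha> \<beta> where x: "x = (\<alpha>, \<beta>)" "0 \<le> \<alpha>" "\<alpha> < \<beta>" "\<beta> \<le> int N + 1"
    "\<alpha> + \<beta> = 2 * int N + 1 - int k2 - int k3" "int N + 1 - int (min k2 k3) \<le> \<beta>"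
    unfolding S_def by auto
  show "x \<in> (\<lambda>i. (int N - int (max k2 k3) - int i, int N - int d + 1 + int i)) ` {0..K}"
  proof (rule image_eqI[where x = "nat (\<beta> - (int N + 1 - int d))"])
    have mm: "int (min k2 k3) + int (max k2 k3) = int k2 + int k3" by (simp add: min_def max_def)
    have "\<beta> - (int N + 1 - int d) \<le> int N - int (max k2 k3)" using x mm assms by linarith
    moreover have "int (N - max k2 k3) = int N - int (max k2 k3)" using assms by auto
    ultimately show "nat (\<beta> - (int N + 1 - int d)) \<in> {0..K}" using assms by (simp add: nat_le_iff)
    show "x = (int N - int (max k2 k3) - int (nat (\<beta> - (int N + 1 - int d))), int N - int d + 1 + int (nat (\<beta> - (int N + 1 - int d))))"
      using x mm assms by auto
  qed
next
  fix x assume "x \<in> (\<lambda>i. (int N - int (max k2 k3) - int i, int N - int d + 1 + int i)) ` {0..K}"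
  then show "x \<in> S k2 k3" using assms unfolding S_def by auto
qed

lemma S_img2:
  assumes "k2 \<le> N" "k3 \<le> N" "d = min k2 k3" "int N - int d \<ge> int (max k2 k3)"
  shows "S k2 k3 = (\<lambda>i. (int N - int k2 - int k3 + int i, int N + 1 - int i)) ` {0..d}"
proof (intro set_eqI iffI)
  fix x assume "x \<in> S k2 k3"
  then obtain \<alpha> \<beta> where x: "x = (\<alpha>, \<beta>)" "0 \<le> \<alpha>" "\<alpha> < \<beta>" "\<beta> \<le> int N + 1"
    "\<alpha> + \<beta> = 2 * int N + 1 - int k2 - int k3" "int N + 1 - int (min k2 k3) \<le> \<beta>"
    unfolding S_def by auto
  show "x \<in> (\<lambda>i. (int N - int k2 - int k3 + int i, int N + 1 - int i)) ` {0..d}"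
  proof (rule image_eqI[where x = "nat (int N + 1 - \<beta>)"])
    have mm: "int (min k2 k3) + int (max k2 k3) = int k2 + int k3" by (simp add: min_def max_def)
    show "nat (int N + 1 - \<beta>) \<in> {0..d}" using x mm assms by auto
    show "x = (int N - int k2 - int k3 + int (nat (int N + 1 - \<beta>)), int N + 1 - int (nat (int N + 1 - \<beta>)))"
      using x mm assms by auto
  qed
next
  fix x assume "x \<in> (\<lambda>i. (int N - int k2 - int k3 + int i, int N + 1 - int i)) ` {0..d}"
  then show "x \<in> S k2 k3" using assms unfolding S_def by auto
qed

lemma Psi_S: assumes "k2 \<le> N" "k3 \<le> N"
  shows "Psi N a1 a2 a3 p c c' l m n s k2 k3 = Max ((\<lambda>(\<alpha>, \<beta>). tc \<alpha> \<beta>) ` S k2 k3)"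
proof -
  consider (c1) "k3 \<ge> k2 \<and> int k3 \<ge> int N - int k2"
    | (c2) "\<not> (k3 \<ge> k2 \<and> int k3 \<ge> int N - int k2)" "int N - int k2 \<ge> int k3 \<and> k3 \<ge> k2"
    | (c3) "\<not> (k3 \<ge> k2 \<and> int k3 \<ge> int N - int k2)" "\<not> (int N - int k2 \<ge> int k3 \<and> k3 \<ge> k2)"
           "k2 \<ge> k3 \<and> int k3 \<ge> int N - int k2"
    | (c4) "\<not> (k3 \<ge> k2 \<and> int k3 \<ge> int N - int k2)" "\<not> (int N - int k2 \<ge> int k3 \<and> k3 \<ge> k2)"
           "\<not> (k2 \<ge> k3 \<and> int k3 \<ge> int N - int k2)"
    by blast
  then show ?thesis
  proof cases
    case c1
    have "S k2 k3 = (\<lambda>i. (int N - int (max k2 k3) - int i, int N - int k2 + 1 + int i)) ` {0..N - k3}"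
      using c1 assms by (intro S_img1) auto
    then show ?thesis unfolding Psi_def Let_def apply (subst if_P[OF c1]) using c1 by (simp add: image_image max_def)
  next
    case c2
    have "S k2 k3 = (\<lambda>i. (int N - int k2 - int k3 + int i, int N + 1 - int i)) ` {0..k2}"
      using c2 assms by (intro S_img2) auto
    then show ?thesis unfolding Psi_def Let_def apply (subst if_not_P[OF c2(1)]) apply (subst if_P[OF c2(2)]) using c2 by (simp add: image_image max_def)
  next
    case c3
    have "S k2 k3 = (\<lambda>i. (int N - int (max k2 k3) - int i, int N - int k3 + 1 + int i)) ` {0..N - k2}"
      using c3 assms by (intro S_img1) auto
    then show ?thesis unfolding Psi_def Let_def apply (subst if_not_P[OF c3(1)]) apply (subst if_not_P[OF c3(2)]) apply (subst if_P[OF c3(3)]) using c3 by (simp add: image_image max_def)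
  next
    case c4
    have "S k2 k3 = (\<lambda>i. (int N - int k2 - int k3 + int i, int N + 1 - int i)) ` {0..k3}"
      using c4 assms by (intro S_img2) auto
    then show ?thesis unfolding Psi_def Let_def apply (subst if_not_P[OF c4(1)]) apply (subst if_not_P[OF c4(2)]) apply (subst if_not_P[OF c4(3)]) using c4 by (simp add: image_image max_def)
  qed
qed

end



context ukp
begin

abbreviation Ps where "Ps \<equiv> Psi N a1 a2 a3 p c c' l m n s"

lemma S_ne: "k2 \<le> N \<Longrightarrow> k3 \<le> N \<Longrightarrow> (int N - int (max k2 k3), int N + 1 - int (min k2 k3)) \<in> S k2 k3"
  unfolding S_def by (auto simp: min_def max_def)

lemma Psi_in: assumes "k2 \<le> N" "k3 \<le> N"
  shows "\<exists>\<alpha> \<beta>. (\<alpha>, \<beta>) \<in> S k2 k3 \<and> Ps k2 k3 = tc \<alpha> \<beta>"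
proof -
  have "Ps k2 k3 \<in> (\<lambda>(\<alpha>, \<beta>). tc \<alpha> \<beta>) ` S k2 k3"
    unfolding Psi_S[OF assms] using S_finite S_ne[OF assms] by (intro Max_in) auto
  then show ?thesis by auto
qed

lemma Psi_ge: assumes "k2 \<le> N" "k3 \<le> N" "(\<alpha>, \<beta>) \<in> S k2 k3"
  shows "tc \<alpha> \<beta> \<le> Ps k2 k3"
  unfolding Psi_S[OF assms(1,2)] using S_finite assms(3) by (intro Max_ge) force+

lemma part1: assumes a23: "a2 > a3"
  shows "tau N a1 a2 a3 p c c' s l (m + 1) (n + 1) =
           Max ((\<lambda>(k2, k3). Ps k2 k3 - real k2 * a2 - real k3 * a3) ` ({0..N} \<times> {0..N}))"
proof (rule antisym)
  obtain a b where ab: "a < b" "b \<le> N + 1" "uP N B \<le> tc (int a) (int b) - Wt a b"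
    using upper[OF a23] by blast
  have mem: "(int a, int b) \<in> S (N + 1 - b) (N - a)"
    using ab unfolding S_def by (auto simp: min_def)
  have "tc (int a) (int b) \<le> Ps (N + 1 - b) (N - a)" using ab by (intro Psi_ge[OF _ _ mem]) auto
  moreover have "Wt a b = real (N + 1 - b) * a2 + real (N - a) * a3"
    unfolding Wt_def using ab by (simp add: of_nat_diff algebra_simps)
  ultimately have "uP N B \<le> Ps (N + 1 - b) (N - a) - real (N + 1 - b) * a2 - real (N - a) * a3"
    using ab(3) by linarith
  also have "\<dots> \<le> Max ((\<lambda>(k2, k3). Ps k2 k3 - real k2 * a2 - real k3 * a3) ` ({0..N} \<times> {0..N}))"
    by (rule Max_ge) (use ab in \<open>auto intro!: image_eqI[where x = "(N + 1 - b, N - a)"]\<close>)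
  finally show "tau N a1 a2 a3 p c c' s l (m + 1) (n + 1) \<le> \<dots>" unfolding tau_eq .
next
  show "Max ((\<lambda>(k2, k3). Ps k2 k3 - real k2 * a2 - real k3 * a3) ` ({0..N} \<times> {0..N}))
      \<le> tau N a1 a2 a3 p c c' s l (m + 1) (n + 1)"
    unfolding tau_eq
  proof (rule Max.boundedI)
    show "finite ((\<lambda>(k2, k3). Ps k2 k3 - real k2 * a2 - real k3 * a3) ` ({0..N} \<times> {0..N}))" by auto
    show "(\<lambda>(k2, k3). Ps k2 k3 - real k2 * a2 - real k3 * a3) ` ({0..N} \<times> {0..N}) \<noteq> {}" by auto
    fix x assume "x \<in> (\<lambda>(k2, k3). Ps k2 k3 - real k2 * a2 - real k3 * a3) ` ({0..N} \<times> {0..N})"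
    then obtain k2 k3 where k: "k2 \<le> N" "k3 \<le> N" "x = Ps k2 k3 - real k2 * a2 - real k3 * a3" by auto
    obtain \<alpha> \<beta> where ab: "(\<alpha>, \<beta>) \<in> S k2 k3" "Ps k2 k3 = tc \<alpha> \<beta>" using Psi_in[OF k(1,2)] by blast
    define a where "a = nat \<alpha>"
    define b where "b = nat \<beta>"
    have S: "0 \<le> \<alpha>" "\<alpha> < \<beta>" "\<beta> \<le> int N + 1" "\<alpha> + \<beta> = 2 * int N + 1 - int k2 - int k3"
      "int N + 1 - int (min k2 k3) \<le> \<beta>" using ab(1) unfolding S_def by auto
    have \<alpha>: "\<alpha> = int a" and \<beta>: "\<beta> = int b" using S unfolding a_def b_def by auto
    have ab': "a < b" "b \<le> N + 1" using S unfolding \<alpha> \<beta> by auto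
    have low: "tc (int a) (int b) - Wt a b \<le> uP N B" by (rule lower[OF a23 ab'])
    have i1: "int k2 + int k3 = int (N + 1 - b) + int (N - a)" using S ab' unfolding \<alpha> \<beta> by auto
    have i2: "int (N + 1 - b) \<le> int k2" using S ab' unfolding \<alpha> \<beta> by (auto simp: min_def split: if_splits)
    have n1: "k2 + k3 = (N + 1 - b) + (N - a)" using i1 by linarith
    have r1: "real k2 + real k3 = real (N + 1 - b) + real (N - a)" using arg_cong[OF n1, of real] by simp
    have k3e: "real k3 = real (N + 1 - b) + real (N - a) - real k2" using r1 by linarith
    have r2: "real (N + 1 - b) \<le> real k2" using i2 by simp
    have "Wt a b = real (N + 1 - b) * a2 + real (N - a) * a3"
      unfolding Wt_def using ab' by (simp add: of_nat_diff algebra_simps)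
    moreover have "real k2 * a2 + real k3 * a3 - (real (N + 1 - b) * a2 + real (N - a) * a3)
        = (real k2 - real (N + 1 - b)) * (a2 - a3)"
      unfolding k3e by (simp add: algebra_simps)
    moreover have "(real k2 - real (N + 1 - b)) * (a2 - a3) \<ge> 0" using r2 a23 by simp
    ultimately have "x \<le> tc (int a) (int b) - Wt a b" unfolding k(3) ab(2) \<alpha> \<beta> by linarith
    then show "x \<le> uP N B" using low by linarith
  qed
qed

lemma S_rec1: assumes "1 \<le> k3" "k3 < k2" "k2 \<le> N"
  shows "S (k2 - 1) k3 = insert (int N + 1 - int k2, int N + 1 - int k3) (S k2 (k3 - 1))"
proof -
  have "min (k2 - 1) k3 = k3" "min k2 (k3 - 1) = k3 - 1" using assms by auto
  then show ?thesis unfolding S_def using assms by (auto simp: of_nat_diff)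
qed

lemma S_rec2: assumes "1 \<le> k2" "k2 < k3" "k3 \<le> N"
  shows "S k2 (k3 - 1) = insert (int N + 1 - int k3, int N + 1 - int k2) (S (k2 - 1) k3)"
proof -
  have "min k2 (k3 - 1) = k2" "min (k2 - 1) k3 = k2 - 1" using assms by auto
  then show ?thesis unfolding S_def using assms by (auto simp: of_nat_diff)
qed

lemma S_rec0: assumes "1 \<le> k" shows "S (k - 1) k = S k (k - 1)"
proof -
  have "min (k - 1) k = k - 1" "min k (k - 1) = k - 1" by auto
  then show ?thesis unfolding S_def using assms by (auto simp: of_nat_diff)
qed

lemma part2: assumes "k2 \<in> {1..N}" "k3 \<in> {1..N}"
  shows "(k2 > k3 \<longrightarrow> Ps (k2 - 1) k3 = max (Ps k2 (k3 - 1)) (tc (int N - int k3 + 1) (int N - int k2 + 1)))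
       \<and> (k2 = k3 \<longrightarrow> Ps (k2 - 1) k3 = Ps k2 (k3 - 1))
       \<and> (k2 < k3 \<longrightarrow> max (Ps (k2 - 1) k3) (tc (int N - int k2 + 1) (int N - int k3 + 1)) = Ps k2 (k3 - 1))"
proof (intro conjI impI)
  have k: "1 \<le> k2" "k2 \<le> N" "1 \<le> k3" "k3 \<le> N" using assms by auto
  let ?f = "\<lambda>(\<alpha>, \<beta>). tc \<alpha> \<beta>"
  {
    assume lt: "k3 < k2"
    have "k3 - 1 \<le> N" using k by simp
    then have ne: "S k2 (k3 - 1) \<noteq> {}" using S_ne[OF k(2)] by blast
    have "Ps (k2 - 1) k3 = Max (?f ` S (k2 - 1) k3)" by (rule Psi_S) (use k in auto)
    also have "\<dots> = Max (?f ` insert (int N + 1 - int k2, int N + 1 - int k3) (S k2 (k3 - 1)))"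
      unfolding S_rec1[OF k(3) lt k(2)] ..
    also have "\<dots> = max (tc (int N + 1 - int k2) (int N + 1 - int k3)) (Max (?f ` S k2 (k3 - 1)))"
      using S_finite ne by simp
    also have "Max (?f ` S k2 (k3 - 1)) = Ps k2 (k3 - 1)" by (rule Psi_S[symmetric]) (use k in auto)
    also have "tc (int N + 1 - int k2) (int N + 1 - int k3) = tc (int N - int k3 + 1) (int N - int k2 + 1)"
      by (subst tc_sym) (simp add: algebra_simps)
    also have "max (tc (int N - int k3 + 1) (int N - int k2 + 1)) (Ps k2 (k3 - 1)) = max (Ps k2 (k3 - 1)) (tc (int N - int k3 + 1) (int N - int k2 + 1))"
      by (rule max.commute)
    finally show "Ps (k2 - 1) k3 = max (Ps k2 (k3 - 1)) (tc (int N - int k3 + 1) (int N - int k2 + 1))" .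
  }
  {
    assume eq: "k2 = k3"
    show "Ps (k2 - 1) k3 = Ps k2 (k3 - 1)"
    proof -
      have "Ps (k2 - 1) k3 = Max (?f ` S (k2 - 1) k3)" by (rule Psi_S) (use k in auto)
      also have "\<dots> = Max (?f ` S k2 (k3 - 1))" unfolding eq S_rec0[OF k(3)] ..
      also have "\<dots> = Ps k2 (k3 - 1)" by (rule Psi_S[symmetric]) (use k in auto)
      finally show ?thesis .
    qed
  }
  {
    assume lt: "k2 < k3"
    have "k2 - 1 \<le> N" using k by simp
    then have ne: "S (k2 - 1) k3 \<noteq> {}" using S_ne[OF _ k(4)] by blast
    have "Ps k2 (k3 - 1) = Max (?f ` S k2 (k3 - 1))" by (rule Psi_S) (use k in auto)
    also have "\<dots> = Max (?f ` insert (int N + 1 - int k3, int N + 1 - int k2) (S (k2 - 1) k3))"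
      unfolding S_rec2[OF k(1) lt k(4)] ..
    also have "\<dots> = max (tc (int N + 1 - int k3) (int N + 1 - int k2)) (Max (?f ` S (k2 - 1) k3))"
      using S_finite ne by simp
    also have "Max (?f ` S (k2 - 1) k3) = Ps (k2 - 1) k3" by (rule Psi_S[symmetric]) (use k in auto)
    also have "tc (int N + 1 - int k3) (int N + 1 - int k2) = tc (int N - int k2 + 1) (int N - int k3 + 1)"
      by (subst tc_sym) (simp add: algebra_simps)
    also have "max (tc (int N - int k2 + 1) (int N - int k3 + 1)) (Ps (k2 - 1) k3) = max (Ps (k2 - 1) k3) (tc (int N - int k2 + 1) (int N - int k3 + 1))"
      by (rule max.commute)
    finally show "max (Ps (k2 - 1) k3) (tc (int N - int k2 + 1) (int N - int k3 + 1)) = Ps k2 (k3 - 1)" ..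
  }
qed

end

theorem lemma7:
  fixes N :: nat and a1 a2 a3 :: real and p c c' :: "nat \<Rightarrow> real"
    and l m n s :: int
  assumes "N \<ge> 1" and "a1 > a2" and "a2 > a3"
  shows "tau N a1 a2 a3 p c c' s l (m + 1) (n + 1) =
           Max ((\<lambda>(k2, k3). Psi N a1 a2 a3 p c c' l m n s k2 k3 - real k2 * a2 - real k3 * a3)
                  ` ({0..N} \<times> {0..N}))
       \<and> (\<forall>k2 \<in> {1..N}. \<forall>k3 \<in> {1..N}.
            (k2 > k3 \<longrightarrow> Psi N a1 a2 a3 p c c' l m n s (k2 - 1) k3 =
                max (Psi N a1 a2 a3 p c c' l m n s k2 (k3 - 1))
                    (tau_c N a1 a2 a3 p c c' l m n s (int N - int k3 + 1) (int N - int k2 + 1)))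
          \<and> (k2 = k3 \<longrightarrow> Psi N a1 a2 a3 p c c' l m n s (k2 - 1) k3 =
                Psi N a1 a2 a3 p c c' l m n s k2 (k3 - 1))
          \<and> (k2 < k3 \<longrightarrow> max (Psi N a1 a2 a3 p c c' l m n s (k2 - 1) k3)
                    (tau_c N a1 a2 a3 p c c' l m n s (int N - int k2 + 1) (int N - int k3 + 1))
                = Psi N a1 a2 a3 p c c' l m n s k2 (k3 - 1)))"
proof -
  interpret ukp N a1 a2 a3 p c c' l m n s .
  show ?thesis using part1[OF assms(3)] part2 by blast
qed


end
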